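(* Let $L$ be a frame and $f\in\overline{\mathrm{H}}(L)$. Then for all $r,s\in\mathbb{Q}$: (1) $f(r,\textsf{---})=\bigvee_{p>r}f(\textsf{---},p)^\ast=\bigvee_{p>r}f(p,\textsf{---})^{\ast\ast}$; (2) $f(\textsf{---},s)=\bigvee_{q<s}f(q,\textsf{---})^\ast=\bigvee_{q<s}f(\textsf{---},q)^{\ast\ast}$.
   Context: $\mathbb{Q}$ is the rationals; $a^\ast$ denotes the pseudocomplement of $a$ in a frame. The frame $\mathfrak{L}(\overline{\mathbb{IR}})$ is presented by generators $(r,\textsf{---})$, $(\textsf{---},s)$ ($r,s\in\mathbb{Q}$) subject to (r1) $(r,\textsf{---})\wedge(\textsf{---},s)=0$ whenever $r\ge s$; (r3) $(r,\textsf{---})=\bigvee_{s>r}(s,\textsf{---})$; (r4) $(\textsf{---},s)=\bigvee_{r<s}(\textsf{---},r)$. $\overline{\mathrm{IC}}(L)$ is the set of frame homomorphisms $\mathfrak{L}(\overline{\mathbb{IR}})\to L$, and $\overline{\mathrm{H}}(L)$ (Hausdorff continuous extended functions) is the set of $f\in\overline{\mathrm{IC}}(L)$ with $f(r,\textsf{---})^\ast\le f(\textsf{---},s)$ and $f(\textsf{---},s)^\ast\le f(r,\textsf{---})$ for all $r<s$ in $\mathbb{Q}$. *)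

theory Defs
  imports Complex_Main
begin

definition is_frame :: "'a::complete_lattice itself \<Rightarrow> bool" where
  "is_frame _ \<longleftrightarrow> (\<forall>(a::'a) S. inf a (Sup S) = Sup ((\<lambda>s. inf a s) ` S))"

definition pcomp :: "'a::complete_lattice \<Rightarrow> 'a" where
  "pcomp a = Sup {x. inf x a = bot}"

text \<open>Generators of the frame of extended partial reals:
  Lft r stands for (r,---), Rgt s stands for (---,s).\<close>
datatype gen = Lft rat | Rgt rat

text \<open>By the universal property of frame presentations, frame homomorphisms
  from the presented frame to L correspond exactly to maps on generators
  that turn the defining relations (r1), (r3), (r4) into valid identities in L.\<close>
definition IC_ext :: "(gen \<Rightarrow> 'a::complete_lattice) \<Rightarrow> bool" where
  "IC_ext f \<longleftrightarrow>
     (\<forall>r s. s \<le> r \<longrightarrow> inf (f (Lft r)) (f (Rgt s)) = bot) \<and>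
     (\<forall>r. f (Lft r) = (SUP s\<in>{s. r < s}. f (Lft s))) \<and>
     (\<forall>s. f (Rgt s) = (SUP r\<in>{r. r < s}. f (Rgt r)))"

definition H_ext :: "(gen \<Rightarrow> 'a::complete_lattice) \<Rightarrow> bool" where
  "H_ext f \<longleftrightarrow> IC_ext f \<and>
     (\<forall>r s. r < s \<longrightarrow> pcomp (f (Lft r)) \<le> f (Rgt s) \<and> pcomp (f (Rgt s)) \<le> f (Lft r))"

end

theory Submission
  imports Defs
begin

lemma pc_iff:
  fixes a x :: "'a::complete_lattice"
  assumes fr: "is_frame TYPE('a)"
  shows "x \<le> pcomp a \<longleftrightarrow> inf x a = bot"
proof
  assume "inf x a = bot" thus "x \<le> pcomp a" unfolding pcomp_def by (simp add: Sup_upper)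
next
  assume h: "x \<le> pcomp a"
  have "inf a (pcomp a) = Sup ((\<lambda>s. inf a s) ` {x. inf x a = bot})"
    using fr unfolding is_frame_def pcomp_def by blast
  also have "\<dots> = bot" by (auto simp: inf_commute intro!: Sup_eqI)
  finally have "inf a (pcomp a) = bot" .
  hence "inf x a \<le> bot" using h by (metis inf_commute inf_mono order_refl)
  thus "inf x a = bot" by (simp add: bot_unique)
qed

lemma pc_anti:
  fixes a b :: "'a::complete_lattice"
  assumes fr: "is_frame TYPE('a)" and "a \<le> b"
  shows "pcomp b \<le> pcomp a"
proof -
  have "inf (pcomp b) b = bot" using pc_iff[OF fr] by blast
  hence "inf (pcomp b) a = bot" using assms(2)
    by (metis bot_unique inf_mono order_refl)
  thus ?thesis using pc_iff[OF fr] by blast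
qed

lemma pc_pp:
  fixes a :: "'a::complete_lattice"
  assumes fr: "is_frame TYPE('a)"
  shows "a \<le> pcomp (pcomp a)"
proof -
  have "inf (pcomp a) a = bot" using pc_iff[OF fr] by blast
  thus ?thesis using pc_iff[OF fr] by (metis inf_commute)
qed

theorem lemma3p4:
  fixes f :: "gen \<Rightarrow> 'a::complete_lattice"
  assumes "is_frame TYPE('a)"
    and "H_ext f"
  shows "\<forall>r s.
     f (Lft r) = (SUP p\<in>{p. r < p}. pcomp (f (Rgt p))) \<and>
     f (Lft r) = (SUP p\<in>{p. r < p}. pcomp (pcomp (f (Lft p)))) \<and>
     f (Rgt s) = (SUP q\<in>{q. q < s}. pcomp (f (Lft q))) \<and>
     f (Rgt s) = (SUP q\<in>{q. q < s}. pcomp (pcomp (f (Rgt q))))"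
proof (intro allI conjI)
  fix r s
  note fr = assms(1)
  have r1: "\<And>r s. s \<le> r \<Longrightarrow> inf (f (Lft r)) (f (Rgt s)) = bot"
    and r3: "\<And>r. f (Lft r) = (SUP s\<in>{s. r < s}. f (Lft s))"
    and r4: "\<And>s. f (Rgt s) = (SUP r\<in>{r. r < s}. f (Rgt r))"
    and h1: "\<And>r s. r < s \<Longrightarrow> pcomp (f (Lft r)) \<le> f (Rgt s)"
    and h2: "\<And>r s. r < s \<Longrightarrow> pcomp (f (Rgt s)) \<le> f (Lft r)"
    using assms(2) unfolding H_ext_def IC_ext_def by blast+
  have LR: "\<And>p. f (Lft p) \<le> pcomp (f (Rgt p))"
    using r1 pc_iff[OF fr] by blast
  have RL: "\<And>p. f (Rgt p) \<le> pcomp (f (Lft p))"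
    using r1 pc_iff[OF fr] by (metis inf_commute order_refl)
  show "f (Lft r) = (SUP p\<in>{p. r < p}. pcomp (f (Rgt p)))"
  proof (rule antisym)
    show "f (Lft r) \<le> (SUP p\<in>{p. r < p}. pcomp (f (Rgt p)))"
      by (subst r3) (rule SUP_mono, use LR in blast)
    show "(SUP p\<in>{p. r < p}. pcomp (f (Rgt p))) \<le> f (Lft r)"
      by (rule SUP_least) (simp add: h2)
  qed
  show "f (Lft r) = (SUP p\<in>{p. r < p}. pcomp (pcomp (f (Lft p))))"
  proof (rule antisym)
    show "f (Lft r) \<le> (SUP p\<in>{p. r < p}. pcomp (pcomp (f (Lft p))))"
      by (subst r3) (rule SUP_mono, use pc_pp[OF fr] in blast)
    show "(SUP p\<in>{p. r < p}. pcomp (pcomp (f (Lft p)))) \<le> f (Lft r)"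
    proof (rule SUP_least)
      fix p assume "p \<in> {p. r < p}"
      hence "pcomp (f (Rgt p)) \<le> f (Lft r)" by (simp add: h2)
      moreover have "pcomp (pcomp (f (Lft p))) \<le> pcomp (f (Rgt p))"
        by (rule pc_anti[OF fr RL])
      ultimately show "pcomp (pcomp (f (Lft p))) \<le> f (Lft r)" by (rule order_trans[rotated])
    qed
  qed
  show "f (Rgt s) = (SUP q\<in>{q. q < s}. pcomp (f (Lft q)))"
  proof (rule antisym)
    show "f (Rgt s) \<le> (SUP q\<in>{q. q < s}. pcomp (f (Lft q)))"
      by (subst r4) (rule SUP_mono, use RL in blast)
    show "(SUP q\<in>{q. q < s}. pcomp (f (Lft q))) \<le> f (Rgt s)"
      by (rule SUP_least) (simp add: h1)
  qed
  show "f (Rgt s) = (SUP q\<in>{q. q < s}. pcomp (pcomp (f (Rgt q))))"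
  proof (rule antisym)
    show "f (Rgt s) \<le> (SUP q\<in>{q. q < s}. pcomp (pcomp (f (Rgt q))))"
      by (subst r4) (rule SUP_mono, use pc_pp[OF fr] in blast)
    show "(SUP q\<in>{q. q < s}. pcomp (pcomp (f (Rgt q)))) \<le> f (Rgt s)"
    proof (rule SUP_least)
      fix q assume "q \<in> {q. q < s}"
      hence "pcomp (f (Lft q)) \<le> f (Rgt s)" by (simp add: h1)
      moreover have "pcomp (pcomp (f (Rgt q))) \<le> pcomp (f (Lft q))"
        by (rule pc_anti[OF fr LR])
      ultimately show "pcomp (pcomp (f (Rgt q))) \<le> f (Rgt s)" by (rule order_trans[rotated])
    qed
  qed
qed

end
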